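(* Let $\Sigma$ be a finite non-empty alphabet, $\Sigma^*$ the set of finite strings over $\Sigma$, $V=\mathbb{R}^d$ with a fixed norm $|\cdot|_V$, $W=\mathbb{R}^N$ with a fixed norm $|\cdot|_W$, and $\lambda>0$. There is a constant $c(\lambda)>0$ depending only on $\lambda$ such that for all maps $\mathbf{h},\mathbf{g}\colon\Sigma^*\to V$, $$d_{\mathcal{V}(V,\Delta)}(\mathbf{h},\mathbf{g})\le c(\lambda)\, d^{\mathcal{H}}_{\mathrm{Aff}(V)}(\mathbf{h},\mathbf{g}).$$
   Context: $\mathrm{Aff}(V)$ is the group of invertible affine maps of $V$; $\mathrm{Aff}(V,W)$ is the set of affine maps $V\to W$, i.e. $\mathbf{v}\mapsto\mathbf{A}\mathbf{v}+\mathbf{b}$ with $\mathbf{A}$ linear $V\to W$, $\mathbf{b}\in W$. For $\mathbf{f}\colon\Sigma^*\to V$, $\|\mathbf{f}\|_\infty=\sup_{\mathbf{y}}|\mathbf{f}(\mathbf{y})|_V$, and $d_\infty(\mathbf{f},\mathbf{f}')=\|\mathbf{f}-\mathbf{f}'\|_\infty$ (values in $[0,\infty]$); analogously $d_{\infty,W}$ for maps into $W$ and $d_{\infty,\Delta}(p,q)=\sup_{\mathbf{y}}|p(\mathbf{y})-q(\mathbf{y})|_W$ for maps $p,q\colon\Sigma^*\to\Delta^{N-1}$, the probability simplex in $\mathbb{R}^N$. For a (hemi-)metric $d$ and non-empty sets $E,E'$, $d(x,E)=\inf_{y\in E}d(x,y)$ and the Hausdorff–Hoare map is $d^{\mathcal{H}}(E,E')=\sup_{x\in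 E}d(x,E')$. Define $d^{\mathcal{H}}_{\mathrm{Aff}(V)}(\mathbf{h},\mathbf{g})=d_\infty^{\mathcal{H}}(\{\psi\circ\mathbf{h}:\psi\in\mathrm{Aff}(V)\},\{\psi\circ\mathbf{g}:\psi\in\mathrm{Aff}(V)\})$. $\mathrm{softmax}_\lambda\colon\mathbb{R}^N\to\Delta^{N-1}$ is the softmax with inverse temperature $\lambda$, $\mathrm{softmax}_\lambda(\mathbf{x})_i=e^{\lambda x_i}/\sum_j e^{\lambda x_j}$. Let $\mathcal{V}_N(\mathbf{h})=\{\mathrm{softmax}_\lambda\circ\psi\circ\mathbf{h}:\psi\in\mathrm{Aff}(V,W)\}$ and $d_{\mathcal{V}(V,\Delta)}(\mathbf{h},\mathbf{g})=d^{\mathcal{H}}_{\infty,\Delta}(\mathcal{V}_N(\mathbf{h}),\mathcal{V}_N(\mathbf{g}))$. *)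

theory Defs
  imports "HOL-Analysis.Analysis" "HOL-Library.FuncSet"
begin

text \<open>Explicit carriers, so that the constant c may be chosen before the
  alphabet, the dimensions d, N and the norms.
  R^n is represented by functions nat => real vanishing outside {..<n}.\<close>

definition vecs :: "nat \<Rightarrow> (nat \<Rightarrow> real) set" where
  "vecs n = {v. \<forall>i\<ge>n. v i = 0}"

definition is_norm_on :: "nat \<Rightarrow> ((nat \<Rightarrow> real) \<Rightarrow> real) \<Rightarrow> bool" where
  "is_norm_on n nrm \<longleftrightarrow>
     (\<forall>v\<in>vecs n. 0 \<le> nrm v \<and> (nrm v = 0 \<longleftrightarrow> v = (\<lambda>i. 0))) \<and>
     (\<forall>v\<in>vecs n. \<forall>a::real. nrm (\<lambda>i. a * v i) = \<bar>a\<bar> * nrm v) \<and>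
     (\<forall>v\<in>vecs n. \<forall>w\<in>vecs n. nrm (\<lambda>i. v i + w i) \<le> nrm v + nrm w)"

definition aff_maps :: "nat \<Rightarrow> nat \<Rightarrow> ((nat \<Rightarrow> real) \<Rightarrow> (nat \<Rightarrow> real)) set" where
  "aff_maps d N = {\<psi>. \<exists>(A :: nat \<Rightarrow> nat \<Rightarrow> real) b. b \<in> vecs N \<and>
      \<psi> = (\<lambda>v i. if i < N then (\<Sum>j<d. A i j * v j) + b i else 0)}"

definition inv_aff_maps :: "nat \<Rightarrow> ((nat \<Rightarrow> real) \<Rightarrow> (nat \<Rightarrow> real)) set" where
  "inv_aff_maps d = {\<psi> \<in> aff_maps d d. bij_betw \<psi> (vecs d) (vecs d)}"

definition sup_dist :: "((nat \<Rightarrow> real) \<Rightarrow> real) \<Rightarrow> 'a set \<Rightarrow>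
    ('a list \<Rightarrow> nat \<Rightarrow> real) \<Rightarrow> ('a list \<Rightarrow> nat \<Rightarrow> real) \<Rightarrow> ereal" where
  "sup_dist nrm S f f' = (SUP y\<in>lists S. ereal (nrm (\<lambda>i. f y i - f' y i)))"

definition hausdorff_hoare :: "('b \<Rightarrow> 'b \<Rightarrow> ereal) \<Rightarrow> 'b set \<Rightarrow> 'b set \<Rightarrow> ereal" where
  "hausdorff_hoare dst E E' = (SUP x\<in>E. INF y\<in>E'. dst x y)"

definition d_Aff :: "((nat \<Rightarrow> real) \<Rightarrow> real) \<Rightarrow> nat set \<Rightarrow> nat \<Rightarrow>
    (nat list \<Rightarrow> nat \<Rightarrow> real) \<Rightarrow> (nat list \<Rightarrow> nat \<Rightarrow> real) \<Rightarrow> ereal" where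
  "d_Aff nV S d h g = hausdorff_hoare (sup_dist nV S)
      ((\<lambda>\<psi>. \<psi> \<circ> h) ` inv_aff_maps d) ((\<lambda>\<psi>. \<psi> \<circ> g) ` inv_aff_maps d)"

definition softmax :: "real \<Rightarrow> nat \<Rightarrow> (nat \<Rightarrow> real) \<Rightarrow> (nat \<Rightarrow> real)" where
  "softmax lam N x = (\<lambda>i. if i < N then exp (lam * x i) / (\<Sum>j<N. exp (lam * x j)) else 0)"

definition V_N :: "real \<Rightarrow> nat \<Rightarrow> nat \<Rightarrow> (nat list \<Rightarrow> nat \<Rightarrow> real) \<Rightarrow> (nat list \<Rightarrow> nat \<Rightarrow> real) set" where
  "V_N lam d N h = {softmax lam N \<circ> \<psi> \<circ> h | \<psi>. \<psi> \<in> aff_maps d N}"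

definition d_VDelta :: "real \<Rightarrow> ((nat \<Rightarrow> real) \<Rightarrow> real) \<Rightarrow> nat set \<Rightarrow> nat \<Rightarrow> nat \<Rightarrow>
    (nat list \<Rightarrow> nat \<Rightarrow> real) \<Rightarrow> (nat list \<Rightarrow> nat \<Rightarrow> real) \<Rightarrow> ereal" where
  "d_VDelta lam nW S d N h g = hausdorff_hoare (sup_dist nW S) (V_N lam d N h) (V_N lam d N g)"

end

theory Submission
  imports Defs
begin

definition ev :: "nat \<Rightarrow> nat \<Rightarrow> real" where
  "ev k = (\<lambda>i. if i = k then 1 else 0)"

lemma norm_zero_on:
  assumes "is_norm_on n nrm" shows "nrm (\<lambda>i. 0) = 0"
  using assms unfolding is_norm_on_def vecs_def by auto

lemma vecs_mono: "m \<le> n \<Longrightarrow> v \<in> vecs m \<Longrightarrow> v \<in> vecs n"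
  unfolding vecs_def by auto

lemma norm_upper:
  assumes N: "is_norm_on n nrm" and v: "v \<in> vecs n"
  shows "nrm v \<le> (\<Sum>i<n. \<bar>v i\<bar> * nrm (ev i))"
proof -
  have "\<forall>v\<in>vecs m. nrm v \<le> (\<Sum>i<m. \<bar>v i\<bar> * nrm (ev i))" if "m \<le> n" for m
    using that
  proof (induction m)
    case 0
    then show ?case using norm_zero_on[OF N] by (auto simp: vecs_def)
  next
    case (Suc m)
    show ?case
    proof
      fix v assume v: "v \<in> vecs (Suc m)"
      define w where "w = v(m := 0)"
      have w: "w \<in> vecs m" using v unfolding w_def vecs_def by auto
      have evn: "ev m \<in> vecs n" using Suc.prems unfolding ev_def vecs_def by auto
      have wn: "w \<in> vecs n" using vecs_mono[of m n w] w Suc.prems by simp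
      have sc: "(\<lambda>i. v m * ev m i) \<in> vecs n" using evn unfolding vecs_def by auto
      have eq: "v = (\<lambda>i. w i + (\<lambda>i. v m * ev m i) i)" unfolding w_def ev_def by auto
      have tri_all: "\<forall>v\<in>vecs n. \<forall>w\<in>vecs n. nrm (\<lambda>i. v i + w i) \<le> nrm v + nrm w"
        using N unfolding is_norm_on_def by blast
      have "nrm v \<le> nrm w + nrm (\<lambda>i. v m * ev m i)"
        using tri_all[rule_format, OF wn sc] eq by simp
      also have "nrm (\<lambda>i. v m * ev m i) = \<bar>v m\<bar> * nrm (ev m)"
        using N evn unfolding is_norm_on_def by blast
      also have "nrm w \<le> (\<Sum>i<m. \<bar>w i\<bar> * nrm (ev i))" using Suc w by auto
      also have "(\<Sum>i<m. \<bar>w i\<bar> * nrm (ev i)) = (\<Sum>i<m. \<bar>v i\<bar> * nrm (ev i))"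
        unfolding w_def by (intro sum.cong) auto
      finally show "nrm v \<le> (\<Sum>i<Suc m. \<bar>v i\<bar> * nrm (ev i))" by simp
    qed
  qed
  then show ?thesis using v by auto
qed

lemma sum_abs_pos:
  assumes "v \<in> vecs n" "v \<noteq> (\<lambda>i. 0)" shows "(\<Sum>i<n. \<bar>v i\<bar>) > 0"
proof -
  obtain j where j: "v j \<noteq> 0" using assms(2) by auto
  then have "j < n" using assms(1) unfolding vecs_def by (metis (mono_tags) mem_Collect_eq not_le)
  then have "\<bar>v j\<bar> \<le> (\<Sum>i<n. \<bar>v i\<bar>)" by (intro member_le_sum) auto
  then show ?thesis using j by linarith
qed

lemma coord_tendsto:
  fixes f :: "nat \<Rightarrow> nat \<Rightarrow> real"
  assumes "f \<longlonglongrightarrow> l" shows "(\<lambda>k. f k j) \<longlonglongrightarrow> l j"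
proof -
  have "isCont (\<lambda>x::nat\<Rightarrow>real. x j) l"
    using continuous_on_eq_continuous_at[OF open_UNIV, of "\<lambda>x::nat\<Rightarrow>real. x j"] continuous_on_product_coordinates[of j]
    by blast
  then show ?thesis using isCont_tendsto_compose[OF _ assms] by blast
qed

lemma norm_lower:
  assumes N: "is_norm_on n nrm"
  shows "\<exists>C>0. \<forall>v\<in>vecs n. \<forall>j. \<bar>v j\<bar> \<le> C * nrm v"
proof -
  define S where "S = (\<lambda>i::nat. if i < n then {-1..1::real} else {0})"
  define K where "K = Pi\<^sub>E UNIV S \<inter> {v. (\<Sum>i<n. \<bar>v i\<bar>) = 1}"
  have "compactin (product_topology (\<lambda>i. euclidean) UNIV) (Pi\<^sub>E UNIV S)"
    by (subst compactin_PiE) (auto simp: S_def)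
  then have c1: "compact (Pi\<^sub>E UNIV S)" by (simp add: euclidean_product_topology)
  have "closed {v::nat\<Rightarrow>real. (\<Sum>i<n. \<bar>v i\<bar>) = 1}"
    by (intro closed_Collect_eq continuous_on_sum continuous_on_rabs
        continuous_on_product_coordinates continuous_on_const)
  then have "compact K" unfolding K_def using c1 compact_Int_closed by blast
  then have sc: "seq_compact K" by (rule compact_imp_seq_compact)
  have Kv: "u \<in> vecs n" if "u \<in> K" for u
  proof -
    have uS: "u i \<in> S i" for i using that unfolding K_def by auto
    have "u i = 0" if "n \<le> i" for i using uS[of i] that by (simp add: S_def)
    then show ?thesis unfolding vecs_def by blast
  qed
  have "\<exists>m>0. \<forall>u\<in>K. m \<le> nrm u"
  proof (rule ccontr)
    assume neg: "\<not> ?thesis"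
    have "\<exists>u\<in>K. nrm u < 1 / (real k + 1)" for k :: nat
    proof -
      have "1 / (real k + 1) > 0" by simp
      then show ?thesis using neg by (meson not_le)
    qed
    then obtain u where u: "\<And>k. u k \<in> K" "\<And>k. nrm (u k) < 1 / (real k + 1)"
      by (metis (no_types))
    have uK: "\<forall>k. u k \<in> K" using u(1) by blast
    obtain l r where l: "l \<in> K" "strict_mono (r :: nat \<Rightarrow> nat)" "(u \<circ> r) \<longlonglongrightarrow> l"
      using seq_compactE[OF sc uK] by blast
    have lv: "l \<in> vecs n" using Kv l(1) .
    have tri_all: "\<forall>v\<in>vecs n. \<forall>w\<in>vecs n. nrm (\<lambda>i. v i + w i) \<le> nrm v + nrm w"
        using N unfolding is_norm_on_def by blast
    define M where "M = (\<Sum>i<n. nrm (ev i))"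
    have bound: "nrm l \<le> (\<Sum>i<n. \<bar>l i - u (r k) i\<bar> * nrm (ev i)) + 1 / (real (r k) + 1)" for k
    proof -
      have ur: "u (r k) \<in> vecs n" using Kv u(1) by blast
      have d: "(\<lambda>i. l i - u (r k) i) \<in> vecs n" using lv ur unfolding vecs_def by auto
      have "nrm l = nrm (\<lambda>i. (\<lambda>i. l i - u (r k) i) i + u (r k) i)" by simp
      also have "\<dots> \<le> nrm (\<lambda>i. l i - u (r k) i) + nrm (u (r k))"
        using tri_all[rule_format, OF d ur] .
      also have "nrm (\<lambda>i. l i - u (r k) i) \<le> (\<Sum>i<n. \<bar>l i - u (r k) i\<bar> * nrm (ev i))"
        using norm_upper[OF N d] by simp
      finally show ?thesis using u(2)[of "r k"] by linarith
    qed
    have t1: "(\<lambda>k. (\<Sum>i<n. \<bar>l i - u (r k) i\<bar> * nrm (ev i))) \<longlonglongrightarrow> (\<Sum>i<n. \<bar>l i - l i\<bar> * nrm (ev i))"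
      using coord_tendsto[OF l(3)]
      by (intro tendsto_intros) (auto simp: o_def)
    have t2: "(\<lambda>k. 1 / (real (r k) + 1)) \<longlonglongrightarrow> 0"
    proof -
      have "(\<lambda>k. 1 / (real k + 1)) \<longlonglongrightarrow> (0::real)"
        using LIMSEQ_inverse_real_of_nat by (simp add: inverse_eq_divide add.commute)
      then show ?thesis using LIMSEQ_subseq_LIMSEQ[OF _ l(2)] by (auto simp: o_def)
    qed
    have "(\<lambda>k. (\<Sum>i<n. \<bar>l i - u (r k) i\<bar> * nrm (ev i)) + 1 / (real (r k) + 1)) \<longlonglongrightarrow> 0"
      using tendsto_add[OF t1 t2] by simp
    then have "nrm l \<le> 0" using bound by (intro LIMSEQ_le_const) auto
    moreover have nn: "\<forall>v\<in>vecs n. 0 \<le> nrm v \<and> (nrm v = 0 \<longleftrightarrow> v = (\<lambda>i. 0))"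
      using N unfolding is_norm_on_def by blast
    ultimately have "nrm l = 0" using lv by force
    then have "l = (\<lambda>i. 0)" using nn lv by blast
    then show False using l(1) unfolding K_def by auto
  qed
  then obtain m where m: "m > 0" "\<And>u. u \<in> K \<Longrightarrow> m \<le> nrm u" by blast
  show ?thesis
  proof (intro exI[of _ "1/m"] conjI ballI allI)
    show "1/m > 0" using m by simp
    fix v j assume v: "v \<in> vecs n"
    show "\<bar>v j\<bar> \<le> 1 / m * nrm v"
    proof (cases "v = (\<lambda>i. 0)")
      case True then show ?thesis using norm_zero_on[OF N] by simp
    next
      case False
      have hom_all: "\<forall>v\<in>vecs n. \<forall>a::real. nrm (\<lambda>i. a * v i) = \<bar>a\<bar> * nrm v"
        using N unfolding is_norm_on_def by blast
      define s where "s = (\<Sum>i<n. \<bar>v i\<bar>)"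
      have s: "s > 0" using sum_abs_pos[OF v False] s_def by simp
      define u where "u = (\<lambda>i. (1/s) * v i)"
      have "\<bar>v i\<bar> \<le> s" for i
      proof (cases "i < n")
        case True then show ?thesis unfolding s_def by (intro member_le_sum) auto
      next
        case False then show ?thesis using v s unfolding vecs_def by auto
      qed
      then have "u i \<in> S i" for i
      proof (cases "i < n")
        case True
        have "\<bar>u i\<bar> = \<bar>v i\<bar> / s" using s unfolding u_def by (simp add: abs_mult)
        also have "\<dots> \<le> 1" using \<open>\<bar>v i\<bar> \<le> s\<close> s by simp
        finally show ?thesis using True unfolding S_def by (simp add: abs_le_iff)
      next
        case False then show ?thesis using v unfolding S_def u_def vecs_def by simp
      qed
      then have "u \<in> Pi\<^sub>E UNIV S" by (simp add: PiE_def Pi_def)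
      moreover have "(\<Sum>i<n. \<bar>u i\<bar>) = 1" unfolding u_def using s
        by (simp add: abs_mult sum_divide_distrib[symmetric] s_def)
      ultimately have "u \<in> K" unfolding K_def by auto
      then have "m \<le> nrm u" using m by auto
      also have "nrm u = \<bar>1/s\<bar> * nrm v" unfolding u_def using hom_all[rule_format, OF v] .
      also have "\<bar>1/s\<bar> = 1/s" using s by simp
      finally have "m * s \<le> nrm v" using s by (simp add: field_simps)
      then have "s \<le> nrm v / m" using m by (simp add: field_simps)
      then show ?thesis using \<open>\<bar>v j\<bar> \<le> s\<close> by simp
    qed
  qed
qed


lemma softmax_ratio:
  assumes lam: "lam > 0" and N: "N > 0" and close: "\<forall>j<N. \<bar>x j - y j\<bar> \<le> \<eta>" and i: "i < N"
  shows "softmax lam N x i \<le> exp (2 * lam * \<eta>) * softmax lam N y i"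
proof -
  define k where "k = exp (lam * \<eta>)"
  have k: "k > 0" unfolding k_def by simp
  have ab: "exp (lam * x j) \<le> k * exp (lam * y j)" "exp (lam * y j) \<le> k * exp (lam * x j)" if "j < N" for j
  proof -
    have "lam * (x j - y j) \<le> lam * \<eta>" "lam * (y j - x j) \<le> lam * \<eta>"
      using close that lam by (auto intro!: mult_left_mono simp: abs_le_iff)
    then have "lam * x j \<le> lam * \<eta> + lam * y j" "lam * y j \<le> lam * \<eta> + lam * x j"
      by (auto simp: algebra_simps)
    then show "exp (lam * x j) \<le> k * exp (lam * y j)" "exp (lam * y j) \<le> k * exp (lam * x j)"
      unfolding k_def by (auto simp: exp_add[symmetric])
  qed
  define Sa where "Sa = (\<Sum>j<N. exp (lam * x j))"
  define Sb where "Sb = (\<Sum>j<N. exp (lam * y j))"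
  have Sa: "Sa > 0" unfolding Sa_def using N by (intro sum_pos) auto
  have Sb: "Sb > 0" unfolding Sb_def using N by (intro sum_pos) auto
  have "Sb \<le> (\<Sum>j<N. k * exp (lam * x j))" unfolding Sb_def by (intro sum_mono ab(2)) auto
  then have SbSa: "Sb \<le> k * Sa" by (simp add: Sa_def sum_distrib_left)
  have "exp (lam * x i) / Sa \<le> k * exp (lam * y i) / Sa"
    using ab(1)[OF i] Sa by (simp add: divide_right_mono)
  also have "\<dots> \<le> k * exp (lam * y i) / (Sb / k)"
    using SbSa Sa Sb k by (intro divide_left_mono) (auto simp: field_simps)
  also have "\<dots> = (k * k) * (exp (lam * y i) / Sb)" using k by (simp add: field_simps)
  also have "k * k = exp (2 * lam * \<eta>)" unfolding k_def by (simp add: exp_add[symmetric])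
  finally show ?thesis using i unfolding softmax_def Sa_def Sb_def by simp
qed

lemma softmax_bounds: "0 \<le> softmax lam N x i" "softmax lam N x i \<le> 1"
proof -
  show "0 \<le> softmax lam N x i" unfolding softmax_def by (auto intro!: divide_nonneg_nonneg sum_nonneg)
  show "softmax lam N x i \<le> 1"
  proof (cases "i < N")
    case True
    have "exp (lam * x i) \<le> (\<Sum>j<N. exp (lam * x j))" using True by (intro member_le_sum) auto
    moreover have "(\<Sum>j<N. exp (lam * x j)) > 0" using True by (intro sum_pos) auto
    ultimately show ?thesis using True unfolding softmax_def by (simp add: divide_le_eq_1)
  qed (simp add: softmax_def)
qed

lemma softmax_close:
  assumes lam: "lam > 0" and N: "N > 0" and close: "\<forall>j<N. \<bar>x j - y j\<bar> \<le> \<eta>"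
  shows "\<bar>softmax lam N x i - softmax lam N y i\<bar> \<le> exp (2 * lam * \<eta>) - 1"
proof -
  have "\<eta> \<ge> 0" using close N by (meson abs_ge_zero order_trans)
  then have K: "exp (2 * lam * \<eta>) \<ge> 1" using lam by simp
  show ?thesis
  proof (cases "i < N")
    case False then show ?thesis using K unfolding softmax_def by simp
  next
    case True
    have close': "\<forall>j<N. \<bar>y j - x j\<bar> \<le> \<eta>" using close by (simp add: abs_minus_commute)
    have r1: "softmax lam N x i \<le> exp (2 * lam * \<eta>) * softmax lam N y i"
      using softmax_ratio[OF lam N close True] .
    have r2: "softmax lam N y i \<le> exp (2 * lam * \<eta>) * softmax lam N x i"
      using softmax_ratio[OF lam N close' True] .
    have b: "softmax lam N x i \<le> 1" "softmax lam N y i \<le> 1" "0 \<le> softmax lam N x i" "0 \<le> softmax lam N y i"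
      using softmax_bounds by auto
    have "(exp (2 * lam * \<eta>) - 1) * softmax lam N y i \<le> exp (2 * lam * \<eta>) - 1"
      using K b by (simp add: mult_left_le)
    moreover have "(exp (2 * lam * \<eta>) - 1) * softmax lam N x i \<le> exp (2 * lam * \<eta>) - 1"
      using K b by (simp add: mult_left_le)
    ultimately show ?thesis using r1 r2 by (simp add: abs_le_iff algebra_simps)
  qed
qed


lemma aff_out: "\<phi> \<in> aff_maps d N \<Longrightarrow> \<phi> v \<in> vecs N"
  unfolding aff_maps_def vecs_def by auto

lemma aff_comp:
  assumes "ch \<in> aff_maps m N" "\<phi> \<in> aff_maps d m"
  shows "ch \<circ> \<phi> \<in> aff_maps d N"
proof -
  obtain C e where e: "e \<in> vecs N" and chi: "ch = (\<lambda>v i. if i < N then (\<Sum>j<m. C i j * v j) + e i else 0)"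
    using assms(1) unfolding aff_maps_def by blast
  obtain A b where b: "b \<in> vecs m" and phi: "\<phi> = (\<lambda>v i. if i < m then (\<Sum>j<d. A i j * v j) + b i else 0)"
    using assms(2) unfolding aff_maps_def by blast
  define A' where "A' = (\<lambda>i k. \<Sum>j<m. C i j * A j k)"
  define b' where "b' = (\<lambda>i. if i < N then (\<Sum>j<m. C i j * b j) + e i else 0)"
  have b': "b' \<in> vecs N" unfolding b'_def vecs_def by auto
  have "ch \<circ> \<phi> = (\<lambda>v i. if i < N then (\<Sum>k<d. A' i k * v k) + b' i else 0)"
  proof (intro ext)
    fix v i
    show "(ch \<circ> \<phi>) v i = (if i < N then (\<Sum>k<d. A' i k * v k) + b' i else 0)"
    proof (cases "i < N")
      case True
      have "(ch \<circ> \<phi>) v i = (\<Sum>j<m. C i j * ((\<Sum>k<d. A j k * v k) + b j)) + e i"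
        using True unfolding chi phi by simp
      also have "\<dots> = (\<Sum>j<m. \<Sum>k<d. C i j * A j k * v k) + (\<Sum>j<m. C i j * b j) + e i"
        by (simp add: distrib_left sum.distrib sum_distrib_left mult.assoc)
      also have "(\<Sum>j<m. \<Sum>k<d. C i j * A j k * v k) = (\<Sum>k<d. A' i k * v k)"
        unfolding A'_def by (subst sum.swap) (simp add: sum_distrib_right)
      finally show ?thesis using True unfolding b'_def by simp
    qed (simp add: chi)
  qed
  then show ?thesis using b' unfolding aff_maps_def by blast
qed

definition scm :: "nat \<Rightarrow> real \<Rightarrow> (nat \<Rightarrow> real) \<Rightarrow> (nat \<Rightarrow> real)" where
  "scm d t = (\<lambda>v i. if i < d then t * v i else 0)"

lemma scm_vec: "v \<in> vecs d \<Longrightarrow> scm d t v = (\<lambda>i. t * v i)"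
  unfolding scm_def vecs_def by auto

lemma scm_aff: "scm d t \<in> aff_maps d d"
proof -
  have "scm d t = (\<lambda>v i. if i < d then (\<Sum>j<d. (if i = j then t else 0) * v j) + (\<lambda>_. 0) i else 0)"
  proof (intro ext)
    fix v i
    have "(\<Sum>j<d. (if i = j then t else 0) * v j) = (\<Sum>j<d. if i = j then t * v j else 0)"
      by (intro sum.cong) auto
    then show "scm d t v i = (if i < d then (\<Sum>j<d. (if i = j then t else 0) * v j) + (\<lambda>_. 0) i else 0)"
      unfolding scm_def by simp
  qed
  moreover have "(\<lambda>_. 0::real) \<in> vecs d" unfolding vecs_def by simp
  ultimately show ?thesis unfolding aff_maps_def
    by (intro CollectI exI[of _ "\<lambda>i j. if i = j then t else 0"] exI[of _ "\<lambda>_. 0"]) simp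
qed

lemma scm_inv: assumes "t \<noteq> 0" shows "scm d t \<in> inv_aff_maps d"
proof -
  have "bij_betw (scm d t) (vecs d) (vecs d)"
  proof (rule bij_betw_byWitness[where f' = "scm d (1/t)"])
    show "\<forall>a\<in>vecs d. scm d (1 / t) (scm d t a) = a"
      using assms by (auto simp: scm_def vecs_def)
    show "\<forall>a'\<in>vecs d. scm d t (scm d (1 / t) a') = a'"
      using assms by (auto simp: scm_def vecs_def)
    show "scm d t ` vecs d \<subseteq> vecs d" "scm d (1 / t) ` vecs d \<subseteq> vecs d"
      by (auto simp: scm_def vecs_def)
  qed
  then show ?thesis unfolding inv_aff_maps_def using scm_aff by blast
qed


lemma approx:
  assumes NV: "is_norm_on d nV" and h: "h \<in> lists S \<rightarrow> vecs d" and g: "g \<in> lists S \<rightarrow> vecs d"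
    and D: "d_Aff nV S d h g \<le> ereal r" and e: "\<epsilon> > 0"
  shows "\<exists>\<phi>\<in>aff_maps d d. \<forall>y\<in>lists S. nV (\<lambda>i. h y i - \<phi> (g y) i) < \<epsilon>"
proof -
  define t where "t = (\<bar>r\<bar> + 1) / \<epsilon>"
  have t: "t > 0" using e unfolding t_def by (simp add: add_nonneg_pos)
  have "scm d t \<circ> h \<in> (\<lambda>\<psi>. \<psi> \<circ> h) ` inv_aff_maps d" using scm_inv t by auto
  then have "(INF z\<in>(\<lambda>\<psi>. \<psi> \<circ> g) ` inv_aff_maps d. sup_dist nV S (scm d t \<circ> h) z) \<le> ereal r"
    using D unfolding d_Aff_def hausdorff_hoare_def SUP_le_iff by blast
  also have "ereal r < ereal (\<bar>r\<bar> + 1)" by simp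
  finally obtain z where z: "z \<in> (\<lambda>\<psi>. \<psi> \<circ> g) ` inv_aff_maps d"
    "sup_dist nV S (scm d t \<circ> h) z < ereal (\<bar>r\<bar> + 1)"
    unfolding INF_less_iff by blast
  then obtain \<phi> where \<phi>: "\<phi> \<in> inv_aff_maps d" "z = \<phi> \<circ> g" by auto
  have \<phi>a: "\<phi> \<in> aff_maps d d" using \<phi> unfolding inv_aff_maps_def by auto
  have hom_all: "\<forall>v\<in>vecs d. \<forall>a::real. nV (\<lambda>i. a * v i) = \<bar>a\<bar> * nV v"
    using NV unfolding is_norm_on_def by blast
  show ?thesis
  proof (intro bexI[of _ "scm d (1/t) \<circ> \<phi>"] ballI)
    show "scm d (1/t) \<circ> \<phi> \<in> aff_maps d d" using aff_comp[OF scm_aff \<phi>a] .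
    fix y assume y: "y \<in> lists S"
    have hy: "h y \<in> vecs d" using h y by auto
    have py: "\<phi> (g y) \<in> vecs d" using aff_out[OF \<phi>a] .
    have "ereal (nV (\<lambda>i. (scm d t \<circ> h) y i - z y i)) \<le> sup_dist nV S (scm d t \<circ> h) z"
      unfolding sup_dist_def using y by (rule SUP_upper)
    then have "ereal (nV (\<lambda>i. (scm d t \<circ> h) y i - z y i)) < ereal (\<bar>r\<bar> + 1)"
      using z(2) by (rule order.strict_trans1)
    then have lt: "nV (\<lambda>i. t * h y i - \<phi> (g y) i) < \<bar>r\<bar> + 1"
      using \<phi>(2) scm_vec[OF hy] by simp
    have eq: "(\<lambda>i. h y i - (scm d (1/t) \<circ> \<phi>) (g y) i) = (\<lambda>i. (1/t) * (\<lambda>i. t * h y i - \<phi> (g y) i) i)"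
      using t scm_vec[OF py] by (auto simp: field_simps)
    have dv: "(\<lambda>i. t * h y i - \<phi> (g y) i) \<in> vecs d" using hy py unfolding vecs_def by auto
    have "nV (\<lambda>i. h y i - (scm d (1/t) \<circ> \<phi>) (g y) i) = \<bar>1/t\<bar> * nV (\<lambda>i. t * h y i - \<phi> (g y) i)"
      unfolding eq using hom_all[rule_format, OF dv] .
    also have "\<dots> < (1/t) * (\<bar>r\<bar> + 1)" using lt t by (simp add: divide_strict_right_mono)
    also have "\<dots> = \<epsilon>" using e by (simp add: t_def)
    finally show "nV (\<lambda>i. h y i - (scm d (1/t) \<circ> \<phi>) (g y) i) < \<epsilon>" .
  qed
qed

lemma daff_nonneg:
  assumes NV: "is_norm_on d nV"
  shows "0 \<le> d_Aff nV S d h g"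
proof -
  have x0: "scm d 1 \<circ> h \<in> (\<lambda>\<psi>. \<psi> \<circ> h) ` inv_aff_maps d" using scm_inv by auto
  have "0 \<le> sup_dist nV S (scm d 1 \<circ> h) z" if zz: "z \<in> (\<lambda>\<psi>. \<psi> \<circ> g) ` inv_aff_maps d" for z
  proof -
    obtain \<phi> where \<phi>: "\<phi> \<in> inv_aff_maps d" "z = \<phi> \<circ> g" using zz by auto
    have \<phi>a: "\<phi> \<in> aff_maps d d" using \<phi> unfolding inv_aff_maps_def by auto
    have "(\<lambda>i. (scm d 1 \<circ> h) [] i - z [] i) \<in> vecs d"
      using aff_out[OF \<phi>a, of "g []"] aff_out[OF scm_aff, of d 1 "h []"] \<phi>(2)
      unfolding vecs_def by auto
    then have "0 \<le> nV (\<lambda>i. (scm d 1 \<circ> h) [] i - z [] i)" using NV unfolding is_norm_on_def by blast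
    also have "ereal \<dots> \<le> sup_dist nV S (scm d 1 \<circ> h) z"
      unfolding sup_dist_def by (rule SUP_upper) simp
    finally show ?thesis by (simp add: zero_ereal_def)
  qed
  then have "0 \<le> (INF z\<in>(\<lambda>\<psi>. \<psi> \<circ> g) ` inv_aff_maps d. sup_dist nV S (scm d 1 \<circ> h) z)"
    by (rule INF_greatest)
  then show ?thesis unfolding d_Aff_def hausdorff_hoare_def using x0 by (rule SUP_upper2[rotated])
qed


lemma vdelta_le0:
  assumes lam: "lam > 0" and N: "N > 0" and NV: "is_norm_on d nV" and NW: "is_norm_on N nW"
    and h: "h \<in> lists S \<rightarrow> vecs d" and g: "g \<in> lists S \<rightarrow> vecs d"
    and apx: "\<And>\<epsilon>. \<epsilon> > 0 \<Longrightarrow> \<exists>\<phi>\<in>aff_maps d d. \<forall>y\<in>lists S. nV (\<lambda>i. h y i - \<phi> (g y) i) < \<epsilon>"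
  shows "d_VDelta lam nW S d N h g \<le> 0"
proof -
  obtain C where C: "C > 0" "\<And>v j. v \<in> vecs d \<Longrightarrow> \<bar>v j\<bar> \<le> C * nV v"
    using norm_lower[OF NV] by blast
  show ?thesis unfolding d_VDelta_def hausdorff_hoare_def
  proof (rule SUP_least)
    fix x assume "x \<in> V_N lam d N h"
    then obtain ch where ch: "ch \<in> aff_maps d N" "x = softmax lam N \<circ> ch \<circ> h"
      unfolding V_N_def by auto
    obtain A b where chA: "ch = (\<lambda>v i. if i < N then (\<Sum>j<d. A i j * v j) + b i else 0)"
      using ch(1) unfolding aff_maps_def by blast
    show "(INF z\<in>V_N lam d N g. sup_dist nW S x z) \<le> 0"
    proof (rule ereal_le_epsilon2)
      fix e :: real assume e: "e > 0"
      define MW where "MW = (\<Sum>i<N. nW (ev i))"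
      have evN: "ev i \<in> vecs N" if "i < N" for i using that unfolding ev_def vecs_def by auto
      have MW: "MW \<ge> 0" unfolding MW_def
        using NW evN unfolding is_norm_on_def by (intro sum_nonneg) blast
      define \<epsilon>' where "\<epsilon>' = e / (MW + 1)"
      have \<epsilon>': "\<epsilon>' > 0" using e MW unfolding \<epsilon>'_def by simp
      define \<eta> where "\<eta> = ln (1 + \<epsilon>') / (2 * lam)"
      have \<eta>: "\<eta> > 0" using \<epsilon>' lam unfolding \<eta>_def by (simp add: ln_gt_zero)
      have exp\<eta>: "exp (2 * lam * \<eta>) = 1 + \<epsilon>'" using \<epsilon>' lam unfolding \<eta>_def by simp
      define L where "L = (\<Sum>i<N. \<Sum>j<d. \<bar>A i j\<bar>) + 1"
      have Arow: "(\<Sum>j<d. \<bar>A i j\<bar>) \<le> L - 1" if "i < N" for i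
        unfolding L_def using that by (simp, intro member_le_sum) (auto intro: sum_nonneg)
      have L: "L \<ge> 1" unfolding L_def by (simp add: sum_nonneg)
      obtain \<phi> where \<phi>: "\<phi> \<in> aff_maps d d" "\<And>y. y \<in> lists S \<Longrightarrow> nV (\<lambda>i. h y i - \<phi> (g y) i) < \<eta> / (L * C)"
        using apx[of "\<eta> / (L * C)"] \<eta> L C by auto
      define z where "z = softmax lam N \<circ> (ch \<circ> \<phi>) \<circ> g"
      have zV: "z \<in> V_N lam d N g" unfolding z_def V_N_def using aff_comp[OF ch(1) \<phi>(1)] by blast
      have "sup_dist nW S x z \<le> ereal e"
        unfolding sup_dist_def
      proof (rule SUP_least)
        fix y assume y: "y \<in> lists S"
        define \<delta> where "\<delta> = (\<lambda>i. h y i - \<phi> (g y) i)"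
        have \<delta>v: "\<delta> \<in> vecs d" using h y aff_out[OF \<phi>(1), of "g y"] unfolding \<delta>_def vecs_def by auto
        have \<delta>s: "\<bar>\<delta> j\<bar> \<le> \<eta> / L" for j
        proof -
          have "\<bar>\<delta> j\<bar> \<le> C * nV \<delta>" using C(2)[OF \<delta>v] .
          also have "\<dots> \<le> C * (\<eta> / (L * C))" using \<phi>(2)[OF y] C unfolding \<delta>_def by (intro mult_left_mono) auto
          also have "\<dots> = \<eta> / L" using C by simp
          finally show ?thesis .
        qed
        have cl: "\<forall>i<N. \<bar>ch (h y) i - ch (\<phi> (g y)) i\<bar> \<le> \<eta>"
        proof (intro allI impI)
          fix i assume i: "i < N"
          have "ch (h y) i - ch (\<phi> (g y)) i = (\<Sum>j<d. A i j * \<delta> j)"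
            using i unfolding chA \<delta>_def by (simp add: sum_subtractf[symmetric] right_diff_distrib)
          also have "\<bar>\<dots>\<bar> \<le> (\<Sum>j<d. \<bar>A i j\<bar> * (\<eta> / L))"
          proof (rule order.trans[OF sum_abs], rule sum_mono)
            fix j assume "j \<in> {..<d}"
            show "\<bar>A i j * \<delta> j\<bar> \<le> \<bar>A i j\<bar> * (\<eta> / L)"
              unfolding abs_mult by (rule mult_left_mono[OF \<delta>s]) simp
          qed
          also have "\<dots> = (\<Sum>j<d. \<bar>A i j\<bar>) * (\<eta> / L)" by (rule sum_distrib_right[symmetric])
          also have "\<dots> \<le> L * (\<eta> / L)"
            using Arow[OF i] \<eta> L by (intro mult_right_mono) auto
          also have "\<dots> = \<eta>" using L by simp
          finally show "\<bar>ch (h y) i - ch (\<phi> (g y)) i\<bar> \<le> \<eta>" .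
        qed
        define \<Delta> where "\<Delta> = (\<lambda>i. x y i - z y i)"
        have \<Delta>eq: "\<Delta> i = softmax lam N (ch (h y)) i - softmax lam N (ch (\<phi> (g y))) i" for i
          unfolding \<Delta>_def ch(2) z_def by simp
        have \<Delta>s: "\<bar>\<Delta> i\<bar> \<le> \<epsilon>'" for i
          using softmax_close[OF lam N cl, of i] exp\<eta> \<Delta>eq by simp
        have \<Delta>v: "\<Delta> \<in> vecs N" unfolding vecs_def using \<Delta>eq by (simp add: softmax_def)
        have "nW \<Delta> \<le> (\<Sum>i<N. \<bar>\<Delta> i\<bar> * nW (ev i))" using norm_upper[OF NW \<Delta>v] .
        also have "\<dots> \<le> (\<Sum>i<N. \<epsilon>' * nW (ev i))"
          using NW evN \<Delta>s unfolding is_norm_on_def by (intro sum_mono mult_right_mono) auto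
        also have "\<dots> = \<epsilon>' * MW" unfolding MW_def by (simp add: sum_distrib_left)
        also have "\<dots> \<le> e" using e MW unfolding \<epsilon>'_def by (simp add: field_simps)
        finally show "ereal (nW (\<lambda>i. x y i - z y i)) \<le> ereal e" unfolding \<Delta>_def by simp
      qed
      then show "(INF z\<in>V_N lam d N g. sup_dist nW S x z) \<le> 0 + ereal e"
        using zV by (simp add: INF_lower2)
    qed
  qed
qed

theorem mainTheorem2:
  fixes lam :: real
  assumes "lam > 0"
  shows "\<exists>c::real. c > 0 \<and>
    (\<forall>(S :: nat set) (d :: nat) (N :: nat) nV nW h g.
       finite S \<longrightarrow> S \<noteq> {} \<longrightarrow> 0 < d \<longrightarrow> 0 < N \<longrightarrow>
       is_norm_on d nV \<longrightarrow> is_norm_on N nW \<longrightarrow>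
       h \<in> lists S \<rightarrow> vecs d \<longrightarrow> g \<in> lists S \<rightarrow> vecs d \<longrightarrow>
       d_VDelta lam nW S d N h g \<le> ereal c * d_Aff nV S d h g)"
proof (intro exI[of _ 1] conjI allI impI)
  show "(1::real) > 0" by simp
  fix S :: "nat set" and d N :: nat and nV nW h g
  assume N: "0 < N" and NV: "is_norm_on d nV" and NW: "is_norm_on N nW"
    and h: "h \<in> lists S \<rightarrow> vecs d" and g: "g \<in> lists S \<rightarrow> vecs d"
  show "d_VDelta lam nW S d N h g \<le> ereal 1 * d_Aff nV S d h g"
  proof (cases "d_Aff nV S d h g = \<infinity>")
    case True then show ?thesis by simp
  next
    case False
    then obtain r where r: "d_Aff nV S d h g \<le> ereal r"
      by (cases "d_Aff nV S d h g") (auto intro: exI[of _ 0])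
    have "d_VDelta lam nW S d N h g \<le> 0"
      using vdelta_le0[OF assms N NV NW h g approx[OF NV h g r]] by blast
    also have "0 \<le> d_Aff nV S d h g" using daff_nonneg[OF NV] .
    finally show ?thesis by (simp add: one_ereal_def[symmetric])
  qed
qed

end
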